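(* As $\epsilon\to 0^+$, $u^\epsilon(r)\to u(r)$ uniformly for $0\le r\le 1$.
   Context: Let $\mathcal{B}(0,1)$ be the unit ball in $\mathbb{R}^n$ and let $V:[0,1)\to[0,\infty)$ be nonnegative and Lipschitz continuous, viewed as a radially symmetric function $V(x)=V(|x|)$ on $\mathcal{B}(0,1)$. For $\epsilon>0$, $u^\epsilon$ denotes the radially symmetric solution of $|Du^\epsilon|-V=\epsilon\Delta u^\epsilon$ in $\mathcal{B}(0,1)$, $u^\epsilon=0$ on $\partial\mathcal{B}(0,1)$, given explicitly for $|x|=r\in[0,1]$ by $u^\epsilon(r)=\int_r^1\left(\frac{1}{\epsilon}\int_0^s (t/s)^{n-1}e^{(t-s)/\epsilon}V(t)\,dt\right)ds$. Also $u(r)=\int_r^1 V(s)\,ds$ for $|x|=r\in[0,1]$, which is the maximal radially symmetric viscosity solution of $|Du|=V$ in $\mathcal{B}(0,1)$, $u=0$ on $\partial\mathcal{B}(0,1)$. *)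

theory Defs
  imports "HOL-Analysis.Analysis"
begin

text \<open>Radial profile of the viscous solution u^eps in the unit ball of R^n.\<close>
definition u_eps :: "nat \<Rightarrow> (real \<Rightarrow> real) \<Rightarrow> real \<Rightarrow> real \<Rightarrow> real" where
  "u_eps n V \<epsilon> r =
     integral {r..1} (\<lambda>s. (1/\<epsilon>) *
        integral {0..s} (\<lambda>t. (t/s) ^ (n - 1) * exp ((t - s)/\<epsilon>) * V t))"

text \<open>Radial profile of the maximal radially symmetric viscosity solution u.\<close>
definition u_lim :: "(real \<Rightarrow> real) \<Rightarrow> real \<Rightarrow> real" where
  "u_lim V r = integral {r..1} V"

end

theory Submission
  imports Defs
begin

lemma expint:
  fixes a b s ep :: real
  assumes "0 \<le> s" "0 < ep"
  shows "((\<lambda>t. exp ((t-s)/ep)  *  (a + b * (s-t))) has_integral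
     (ep * a + b * ep^2 - exp (-s/ep) * (ep * a + ep * b * s + b * ep^2))) {0..s}"
proof -
  define G where "G t = ep  *  exp ((t-s)/ep)  *  (a + b * (s-t)) + b * ep^2 * exp ((t-s)/ep)" for t
  have "((\<lambda>t. exp ((t-s)/ep)  *  (a + b * (s-t))) has_integral (G s - G 0)) {0..s}"
  proof (rule fundamental_theorem_of_calculus)
    show "0 \<le> s" by fact
    fix x assume "x \<in> {0..s}"
    have "(G has_real_derivative exp ((x-s)/ep)  *  (a + b * (s-x))) (at x within {0..s})"
      unfolding G_def
      using assms by (auto intro!: derivative_eq_intros simp: field_simps power2_eq_square)
    then show "(G has_vector_derivative exp ((x-s)/ep)  *  (a + b * (s-x))) (at x within {0..s})"
      by (simp add: has_real_derivative_iff_has_vector_derivative)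
  qed
  moreover have "G s - G 0 = ep * a + b * ep^2 - exp (-s/ep) * (ep * a + ep * b * s + b * ep^2)"
    unfolding G_def by (simp add: algebra_simps)
  ultimately show ?thesis by simp
qed

definition wf :: "nat \<Rightarrow> (real \<Rightarrow> real) \<Rightarrow> real \<Rightarrow> real \<Rightarrow> real" where
  "wf n W ep y = (1/ep) * integral {0..y} (\<lambda>t. (t/y) ^ (n - 1) * exp ((t - y)/ep) * W t)"

lemma kint:
  fixes W :: "real \<Rightarrow> real" and y ep :: real
  assumes "continuous_on {0..1} W" "0 \<le> y" "y \<le> 1"
  shows "(\<lambda>t. (t/y) ^ (n - 1) * exp ((t - y)/ep) * W t) integrable_on {0..y}"
proof -
  have "{0..y} \<subseteq> {0..1::real}" using assms by auto
  then have "continuous_on {0..y} W" by (rule continuous_on_subset[OF assms(1)])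
  then have "continuous_on {0..y} (\<lambda>t. (t/y) ^ (n - 1) * exp ((t - y)/ep) * W t)"
    unfolding divide_inverse by (intro continuous_intros)
  then show ?thesis by (rule integrable_continuous_interval)
qed

lemma wf_bounds:
  assumes W: "continuous_on {0..1} W" "\<And>x. x \<in> {0..1} \<Longrightarrow> 0 \<le> W x \<and> W x \<le> M"
    and lip: "L-lipschitz_on {0..1} W" and n: "n \<ge> 1" and ep: "0 < ep"
    and y: "0 < y" "y \<le> 1"
  shows "0 \<le> wf n W ep y" "wf n W ep y \<le> M" "wf n W ep y \<le> W y + L * ep"
    "W y - (L + real n * M / y) * ep \<le> wf n W ep y"
proof -
  define k where "k t = (t/y) ^ (n - 1) * exp ((t - y)/ep) * W t" for t
  have ki: "k integrable_on {0..y}" unfolding k_def using kint[OF W(1)] y by auto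
  have L0: "0 \<le> L" using lip lipschitz_on_nonneg by blast
  have M0: "0 \<le> M" using W(2)[of 0] by auto
  have Wt: "0 \<le> W t" "W t \<le> M" if "t \<in> {0..y}" for t using W(2)[of t] that y by auto
  have Wl: "\<bar>W t - W y\<bar> \<le> L * (y - t)" if "t \<in> {0..y}" for t
    using lipschitz_onD[OF lip, of t y] that y by (auto simp: dist_real_def)
  have pw1: "0 \<le> (t/y) ^ (n - 1)" "(t/y) ^ (n - 1) \<le> 1" if "t \<in> {0..y}" for t
    using that y by (auto intro!: power_le_one)
  have kw: "wf n W ep y = (1/ep) * integral {0..y} k" unfolding wf_def k_def by simp
  show "0 \<le> wf n W ep y" unfolding kw using ep
    by (intro mult_nonneg_nonneg integral_nonneg[OF ki]) (auto simp: k_def intro!: mult_nonneg_nonneg pw1 Wt)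
  have I1: "integral {0..y} k \<le> ep * M + 0 * ep^2 - exp (-y/ep) * (ep * M + ep * 0 * y + 0 * ep^2)"
  proof -
    have "integral {0..y} k \<le> integral {0..y} (\<lambda>t. exp ((t-y)/ep) * (M + 0 * (y-t)))"
    proof (rule integral_le[OF ki])
      show "(\<lambda>t. exp ((t-y)/ep) * (M + 0 * (y-t))) integrable_on {0..y}"
        by (rule has_integral_integrable[OF expint]) (use y ep in auto)
      fix t assume t: "t \<in> {0..y}"
      have "(t/y) ^ (n - 1) * W t \<le> 1 * M"
        by (rule mult_mono) (use pw1[OF t] Wt[OF t] in auto)
      then show "k t \<le> exp ((t-y)/ep) * (M + 0 * (y-t))" unfolding k_def
        by (simp add: mult.commute mult.left_commute)
    qed
    also have "\<dots> = ep * M + 0 * ep^2 - exp (-y/ep) * (ep * M + ep * 0 * y + 0 * ep^2)"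
      by (rule integral_unique[OF expint]) (use y ep in auto)
    finally show ?thesis .
  qed
  moreover have "0 \<le> exp (-y/ep) * (ep * M)" using ep M0 by simp
  ultimately have "integral {0..y} k \<le> ep * M" by simp
  then have "(1/ep) * integral {0..y} k \<le> (1/ep) * (ep * M)"
    by (rule mult_left_mono) (use ep in simp)
  then show "wf n W ep y \<le> M" unfolding kw using ep by simp
  have I2: "integral {0..y} k \<le> ep * W y + L * ep^2 - exp (-y/ep) * (ep * W y + ep * L * y + L * ep^2)"
  proof -
    have "integral {0..y} k \<le> integral {0..y} (\<lambda>t. exp ((t-y)/ep) * (W y + L * (y-t)))"
    proof (rule integral_le[OF ki])
      show "(\<lambda>t. exp ((t-y)/ep) * (W y + L * (y-t))) integrable_on {0..y}"
        by (rule has_integral_integrable[OF expint]) (use y ep in auto)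
      fix t assume t: "t \<in> {0..y}"
      have "(t/y) ^ (n - 1) * W t \<le> 1 * (W y + L * (y-t))"
        by (rule mult_mono) (use pw1[OF t] Wt[OF t] Wl[OF t] in auto)
      then show "k t \<le> exp ((t-y)/ep) * (W y + L * (y-t))" unfolding k_def
        by (simp add: mult.commute mult.left_commute)
    qed
    also have "\<dots> = ep * W y + L * ep^2 - exp (-y/ep) * (ep * W y + ep * L * y + L * ep^2)"
      by (rule integral_unique[OF expint]) (use y ep in auto)
    finally show ?thesis .
  qed
  have "0 \<le> exp (-y/ep) * (ep * W y + ep * L * y + L * ep^2)"
    using Wt[of y] y ep L0 by (auto intro!: mult_nonneg_nonneg add_nonneg_nonneg)
  with I2 have "integral {0..y} k \<le> ep * (W y + L * ep)" by (simp add: algebra_simps power2_eq_square)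
  then show "wf n W ep y \<le> W y + L * ep" unfolding kw using ep
    by (simp add: field_simps)
  define b where "b = L + (real n - 1) * M / y"
  have b0: "0 \<le> b" unfolding b_def using L0 M0 n y by auto
  have I3: "ep * W y - b * ep^2 - exp (-y/ep) * (ep * W y - ep * b * y - b * ep^2) \<le> integral {0..y} k"
  proof -
    have "integral {0..y} (\<lambda>t. exp ((t-y)/ep) * (W y + (-b) * (y-t))) \<le> integral {0..y} k"
    proof (rule integral_le[OF _ ki])
      show "(\<lambda>t. exp ((t-y)/ep) * (W y + (-b) * (y-t))) integrable_on {0..y}"
        by (rule has_integral_integrable[OF expint]) (use y ep in auto)
      fix t assume t: "t \<in> {0..y}"
      have bern: "1 + real (n - 1) * ((t - y)/y) \<le> (1 + (t-y)/y) ^ (n - 1)"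
        by (rule Bernoulli_inequality) (use t y in \<open>auto simp: field_simps\<close>)
      have e1: "1 + (t-y)/y = t/y" using y by (simp add: field_simps)
      have e2: "real (n - 1) = real n - 1" using n by simp
      have c: "1 - (real n - 1) * (y - t) / y \<le> (t/y) ^ (n - 1)"
      proof -
        have c0: "1 + (real n - 1) * ((t - y)/y) \<le> (t/y)^(n-1)" using bern unfolding e1 e2 .
        have "(real n - 1) * (y - t) / y = - ((real n - 1) * ((t - y)/y))" using y by (simp add: field_simps)
        then show ?thesis using c0 by linarith
      qed
      have "(1 - (real n - 1) * (y - t) / y) * W t \<le> (t/y) ^ (n - 1) * W t"
        by (rule mult_right_mono[OF c Wt(1)[OF t]])
      moreover have "(real n - 1) * (y - t) / y * W t \<le> (real n - 1) * (y - t) / y * M"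
        by (rule mult_left_mono) (use Wt[OF t] t y n in auto)
      ultimately have "W y + (-b) * (y-t) \<le> (t/y) ^ (n - 1) * W t"
        using Wl[OF t] unfolding b_def by (simp add: algebra_simps)
      then show "exp ((t-y)/ep) * (W y + (-b) * (y-t)) \<le> k t" unfolding k_def
        by (simp add: mult.commute mult.left_commute)
    qed
    moreover have "integral {0..y} (\<lambda>t. exp ((t-y)/ep) * (W y + (-b) * (y-t)))
       = ep * W y + (-b) * ep^2 - exp (-y/ep) * (ep * W y + ep * (-b) * y + (-b) * ep^2)"
      by (rule integral_unique[OF expint]) (use y ep in auto)
    ultimately show ?thesis by (simp add: algebra_simps)
  qed
  have ex: "exp (-y/ep) \<le> ep / y"
  proof -
    have "y/ep \<le> exp (y/ep)" using exp_ge_add_one_self[of "y/ep"] by linarith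
    then have "inverse (exp (y/ep)) \<le> inverse (y/ep)"
      by (rule le_imp_inverse_le) (use y ep in auto)
    moreover have "exp (-y/ep) = inverse (exp (y/ep))" by (simp add: exp_minus)
    ultimately show ?thesis by simp
  qed
  have "exp (-y/ep) * (ep * W y - ep * b * y - b * ep^2) \<le> exp (-y/ep) * (ep * M)"
  proof (rule mult_left_mono)
    have "ep * W y \<le> ep * M" by (rule mult_left_mono) (use Wt[of y] y ep in auto)
    moreover have "0 \<le> ep * b * y" "0 \<le> b * ep^2" using y ep b0 by auto
    ultimately show "ep * W y - ep * b * y - b * ep^2 \<le> ep * M" by linarith
  qed simp
  also have "\<dots> \<le> ep / y * (ep * M)"
    by (rule mult_right_mono[OF ex]) (use ep M0 in auto)
  finally have "ep * W y - b * ep^2 - ep / y * (ep * M) \<le> integral {0..y} k" using I3 by linarith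
  then have "ep * (W y - (b + M / y) * ep) \<le> ep * wf n W ep y"
    unfolding kw using ep by (simp add: field_simps power2_eq_square)
  then have "W y - (b + M / y) * ep \<le> wf n W ep y" using ep by simp
  moreover have "b + M / y = L + real n * M / y" unfolding b_def using y by (simp add: field_simps)
  ultimately show "W y - (L + real n * M / y) * ep \<le> wf n W ep y" by simp
qed

lemma wf_alt:
  fixes W :: "real \<Rightarrow> real"
  assumes y: "0 \<le> y"
  shows "wf n W ep y = (y/ep) * integral {0..1} (\<lambda>x. x ^ (n - 1) * exp ((y * x - y)/ep) * W (y * x))"
proof (cases "y = 0")
  case True
  then show ?thesis by (simp add: wf_def)
next
  case False
  then have yp: "0 < y" using y by simp
  define f where "f t = (t/y) ^ (n - 1) * exp ((t - y)/ep) * W t" for t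
  have img: "(\<lambda>x. x / y) ` {0..y} = {0..1}"
  proof
    show "(\<lambda>x. x / y) ` {0..y} \<subseteq> {0..1}" using yp by (auto simp: field_simps)
    show "{0..1} \<subseteq> (\<lambda>x. x / y) ` {0..y}"
    proof
      fix x :: real assume "x \<in> {0..1}"
      then have "y * x \<in> {0..y}" "x = (y * x) / y" using yp by (auto simp: mult_le_cancel_left1)
      then show "x \<in> (\<lambda>x. x / y) ` {0..y}" by blast
    qed
  qed
  have "integral {0..1} (\<lambda>x. f (y * x)) = (1 / \<bar>y\<bar>) *\<^sub>R integral {0..y} f"
    using integral_stretch_real[of y 0 y f] False img by simp
  moreover have "(\<lambda>x. f (y * x)) = (\<lambda>x. x ^ (n - 1) * exp ((y * x - y)/ep) * W (y * x))"
    using False by (simp add: f_def)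
  ultimately have "integral {0..1} (\<lambda>x. x ^ (n - 1) * exp ((y * x - y)/ep) * W (y * x)) = integral {0..y} f / y"
    using yp by simp
  then show ?thesis using yp unfolding wf_def f_def[symmetric] by simp
qed

lemma wf_cont:
  fixes W :: "real \<Rightarrow> real"
  assumes W: "continuous_on {0..1} W"
  shows "continuous_on {0..1} (wf n W ep)"
proof -
  have "continuous_on ({0..1} \<times> cbox 0 1) (\<lambda>(y, x). x ^ (n - 1) * exp ((y * x - y)/ep) * W (y * x))"
  proof -
    have c1: "continuous_on ({0..1::real} \<times> cbox 0 (1::real)) (\<lambda>p. fst p * snd p)"
      by (intro continuous_intros)
    have "(\<lambda>p. fst p * snd p) ` ({0..1::real} \<times> cbox 0 (1::real)) \<subseteq> {0..1}"
      by (auto simp: mult_le_one)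
    then have c2: "continuous_on ({0..1::real} \<times> cbox 0 (1::real)) (\<lambda>p. W (fst p * snd p))"
      using continuous_on_compose2[OF W c1] by blast
    have "continuous_on ({0..1::real} \<times> cbox 0 (1::real))
      (\<lambda>p. snd p ^ (n - 1) * exp ((fst p * snd p - fst p) * inverse ep) * W (fst p * snd p))"
      by (intro continuous_intros c2)
    then show ?thesis by (simp add: case_prod_beta divide_inverse)
  qed
  from integral_continuous_on_param[OF this]
  have "continuous_on {0..1} (\<lambda>y. integral (cbox 0 1) (\<lambda>x. x ^ (n - 1) * exp ((y * x - y)/ep) * W (y * x)))"
    by simp
  then have "continuous_on {0..1} (\<lambda>y. (y * inverse ep) * integral {0..1} (\<lambda>x. x ^ (n - 1) * exp ((y * x - y)/ep) * W (y * x)))"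
    by (intro continuous_intros) simp
  then show ?thesis
    by (rule continuous_on_eq) (auto simp: wf_alt divide_inverse)
qed

lemma absbound:
  fixes f :: "real \<Rightarrow> real"
  assumes "a \<le> b" "continuous_on {a..b} f" "0 \<le> B" "\<And>x. x \<in> {a..b} \<Longrightarrow> \<bar>f x\<bar> \<le> B"
  shows "\<bar>integral {a..b} f\<bar> \<le> B * (b - a)"
proof -
  have "(f has_integral integral {a..b} f) {a..b}"
    using integrable_continuous_interval[OF assms(2)] by blast
  from has_integral_bound_real[OF assms(3) finite.emptyI this] assms show ?thesis by auto
qed

theorem theorem3p1:
  fixes V :: "real \<Rightarrow> real" and n :: nat and L :: real
  assumes "n \<ge> 1"
    and "\<forall>t\<in>{0..<1}. V t \<ge> 0"
    and "L-lipschitz_on {0..<1} V"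
  shows "uniform_limit {0..1} (\<lambda>\<epsilon> r. u_eps n V \<epsilon> r) (u_lim V) (at_right 0)"
proof -
  obtain W where Wl: "L-lipschitz_on {0..1} W" and WV: "\<And>x. x \<in> {0..<1} \<Longrightarrow> W x = V x"
    using lipschitz_extend_closure[OF assms(3)] by auto
  have L0: "0 \<le> L" using Wl lipschitz_on_nonneg by blast
  have Wc: "continuous_on {0..1} W" using Wl by (rule lipschitz_on_continuous_on)
  define M where "M = \<bar>V 0\<bar> + L"
  have M0: "0 \<le> M" using L0 by (simp add: M_def)
  have Wb: "0 \<le> W x \<and> W x \<le> M" if x: "x \<in> {0..1}" for x
  proof
    have "x \<in> closure {0..<(1::real)}" using x by simp
    moreover have "continuous_on (closure {0..<(1::real)}) W" using Wc by simp
    ultimately show "0 \<le> W x"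
      using continuous_ge_on_closure[of "{0..<1}" W x 0] WV assms(2) by auto
    have "dist (W x) (W 0) \<le> L * dist x 0" using lipschitz_onD[OF Wl, of x 0] x by auto
    moreover have "W 0 = V 0" using WV[of 0] by simp
    moreover have "dist x 0 \<le> 1" using x by (auto simp: dist_real_def)
    moreover have "L * dist x 0 \<le> L * 1" using L0 calculation(3) by (intro mult_left_mono) auto
    ultimately show "W x \<le> M" unfolding M_def dist_real_def by linarith
  qed
  have ueq: "u_eps n V ep r = integral {r..1} (wf n W ep)" if r: "r \<in> {0..1}" for ep r
    unfolding u_eps_def wf_def
  proof (rule integral_cong)
    fix y assume y: "y \<in> {r..1}"
    have "integral {0..y} (\<lambda>t. (t/y) ^ (n - 1) * exp ((t - y)/ep) * V t)
        = integral {0..y} (\<lambda>t. (t/y) ^ (n - 1) * exp ((t - y)/ep) * W t)"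
      by (rule integral_spike[of "{1}"]) (use y r WV in auto)
    then show "1 / ep * integral {0..y} (\<lambda>t. (t/y) ^ (n - 1) * exp ((t - y)/ep) * V t)
        = 1 / ep * integral {0..y} (\<lambda>t. (t/y) ^ (n - 1) * exp ((t - y)/ep) * W t)" by simp
  qed
  have leq: "u_lim V r = integral {r..1} W" if r: "r \<in> {0..1}" for r
    unfolding u_lim_def by (rule integral_spike[of "{1}"]) (use r WV in auto)
  show ?thesis
    unfolding uniform_limit_iff
  proof (intro allI impI)
    fix e :: real assume e: "0 < e"
    define d where "d = min (1/2) (e / (4 * (M + 1)))"
    have d0: "0 < d" "d \<le> 1/2"
    proof -
      have "0 < e / (4 * (M + 1))" using e M0 by simp
      then show "0 < d" unfolding d_def by simp
      show "d \<le> 1/2" unfolding d_def by (rule min.cobounded1)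
    qed
    have Md: "M * d < e / 2"
    proof -
      have "M * d \<le> M * (e / (4 * (M + 1)))" by (rule mult_left_mono) (use M0 in \<open>auto simp: d_def\<close>)
      also have "\<dots> = e / 4 * (M / (M + 1))" using M0 by (simp add: field_simps)
      also have "\<dots> \<le> e / 4 * 1" using M0 e by (intro mult_left_mono) auto
      finally show ?thesis using e by simp
    qed
    define C where "C = L + real n * M / d"
    have C0: "0 \<le> C" using L0 M0 d0 by (simp add: C_def)
    define b where "b = e / (4 * (C + 1))"
    have b0: "0 < b" using e C0 by (simp add: b_def)
    have Cb: "C * ep < e / 2" if "0 < ep" "ep < b" for ep
    proof -
      have "C * ep \<le> C * b" using that C0 by (intro mult_left_mono) auto
      also have "\<dots> = e / 4 * (C / (C + 1))" using C0 by (simp add: b_def field_simps)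
      also have "\<dots> \<le> e / 4 * 1" using C0 e by (intro mult_left_mono) auto
      finally show ?thesis using e by simp
    qed
    show "\<forall>\<^sub>F ep in at_right 0. \<forall>r\<in>{0..1}. dist (u_eps n V ep r) (u_lim V r) < e"
      unfolding eventually_at_right_field
    proof (intro exI[of _ b] conjI allI impI ballI)
      show "0 < b" by fact
      fix ep r :: real assume ep: "0 < ep" "ep < b" and r: "r \<in> {0..1}"
      define D where "D y = wf n W ep y - W y" for y
      have Dc: "continuous_on {0..1} D" unfolding D_def using wf_cont[OF Wc] Wc by (intro continuous_intros)
      have Dc': "continuous_on {a..c} D" if "0 \<le> a" "c \<le> 1" for a c
        by (rule continuous_on_subset[OF Dc]) (use that in auto)
      have DM: "\<bar>D y\<bar> \<le> M" if "y \<in> {0..1}" for y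
      proof (cases "y = 0")
        case True
        then show ?thesis using Wb[of 0] by (simp add: D_def wf_def)
      next
        case False
        then have "0 < y" "y \<le> 1" using that by auto
        from wf_bounds[OF Wc Wb Wl assms(1) ep(1) this] Wb[OF that] show ?thesis
          unfolding D_def by linarith
      qed
      have DC: "\<bar>D y\<bar> \<le> C * ep" if "y \<in> {d..1}" for y
      proof -
        have y: "0 < y" "y \<le> 1" using that d0 by auto
        have "real n * M / y \<le> real n * M / d"
          using that d0 M0 by (intro divide_left_mono) auto
        then have "(L + real n * M / y) * ep \<le> C * ep" unfolding C_def using ep by (intro mult_right_mono) auto
        moreover have "L * ep \<le> C * ep" unfolding C_def using ep d0 M0 by (intro mult_right_mono) auto
        ultimately show ?thesis using wf_bounds(3,4)[OF Wc Wb Wl assms(1) ep(1) y]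
          unfolding D_def abs_le_iff by linarith
      qed
      have Dint: "D integrable_on {r..1}" using Dc'[of r 1] r
        by (intro integrable_continuous_interval) auto
      have "dist (u_eps n V ep r) (u_lim V r) = \<bar>integral {r..1} D\<bar>"
      proof -
        have i1: "wf n W ep integrable_on {r..1}"
          by (rule integrable_continuous_interval, rule continuous_on_subset[OF wf_cont[OF Wc]]) (use r in auto)
        have i2: "W integrable_on {r..1}"
          by (rule integrable_continuous_interval, rule continuous_on_subset[OF Wc]) (use r in auto)
        show ?thesis unfolding ueq[OF r] leq[OF r] dist_real_def D_def
          using integral_diff[OF i1 i2] by simp
      qed
      also have "\<dots> < e"
      proof (cases "d \<le> r")
        case True
        have "\<bar>integral {r..1} D\<bar> \<le> C * ep * (1 - r)"
        proof (rule absbound)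
          show "r \<le> 1" using r by simp
          show "continuous_on {r..1} D" by (rule Dc') (use r in simp_all)
          show "0 \<le> C * ep" using C0 ep by simp
          fix x assume "x \<in> {r..1}" then show "\<bar>D x\<bar> \<le> C * ep" using True by (intro DC) simp
        qed
        also have "\<dots> \<le> C * ep * 1" using r C0 ep by (intro mult_left_mono) auto
        finally show ?thesis using Cb[OF ep] e by simp
      next
        case False
        have "integral {r..d} D + integral {d..1} D = integral {r..1} D"
          by (rule Henstock_Kurzweil_Integration.integral_combine[OF _ _ Dint]) (use False d0 in simp_all)
        moreover have "\<bar>integral {r..d} D\<bar> \<le> M * (d - r)"
        proof (rule absbound)
          show "r \<le> d" using False by simp
          show "continuous_on {r..d} D" by (rule Dc') (use r d0 in simp_all)
          show "0 \<le> M" by (rule M0)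
          fix x assume "x \<in> {r..d}" then show "\<bar>D x\<bar> \<le> M" using r d0 by (intro DM) simp
        qed
        moreover have "\<bar>integral {d..1} D\<bar> \<le> C * ep * (1 - d)"
        proof (rule absbound)
          show "d \<le> 1" using d0 by simp
          show "continuous_on {d..1} D" by (rule Dc') (use d0 in simp_all)
          show "0 \<le> C * ep" using C0 ep by simp
          fix x assume "x \<in> {d..1}" then show "\<bar>D x\<bar> \<le> C * ep" by (intro DC)
        qed
        moreover have "M * (d - r) \<le> M * d" using r M0 by (intro mult_left_mono) auto
        moreover have "C * ep * (1 - d) \<le> C * ep * 1" using d0 C0 ep by (intro mult_left_mono) auto
        ultimately show ?thesis using Cb[OF ep] Md by linarith
      qed
      finally show "dist (u_eps n V ep r) (u_lim V r) < e" .
    qed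
  qed
qed

end
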